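(* Let $n\ge2$, $\alpha,\beta>0$, $a=1/\alpha$, $b=1/\beta$, and let $1\le j_1<\dots<j_r\le n-1$. For $1\le j\le n-1$ let $\alpha_j$ be the event that box $(n-j,j)$ (on the second main diagonal) contains $\alpha$. If $j_k\le j_{k+1}-2$ for all $k=1,\dots,r-1$, then \[\mathbb{P}_{n,\alpha,\beta}(\alpha_{j_1},\dots,\alpha_{j_r})=\prod_{k=1}^{r}\frac{b+j_{r-k+1}-2r+2k-1}{(n+a+b-2r+2k-1)(n+a+b-2r+2k-2)}.\] Otherwise, $\mathbb{P}_{n,\alpha,\beta}(\alpha_{j_1},\dots,\alpha_{j_r})=0$.
   Context: A staircase tableau of size $n$ has boxes $(i,j)$ with $i,j\ge1$ and $i+j\le n+1$, rows numbered from the top and columns from the left. An $\alpha/\beta$-staircase tableau of size $n$ is a filling in which each box is empty or contains $\alpha$ or $\beta$, such that: all boxes in the same column and above an $\alpha$ are empty; all boxes in the same row and to the left of a $\beta$ are empty; every main-diagonal box (with $i+j=n+1$) contains a symbol. $\overline{\mathcal{S}}_n$ is the set of these. The weight is $wt(S)=\alpha^{N_\alpha}\beta^{N_\beta}$ ($N_\alpha,N_\beta$ the numbers of $\alpha$'s, $\beta$'s), and for $\alpha,\beta>0$, $\mathbb{P}_{n,\alpha,\beta}(S)=wt(S)/Z_n(\alpha,\beta)$ with $Z_n(\alpha,\beta)=\sum_{T\in\overline{\mathcal{S}}_n}wt(T)$. The second main diagonal consists of the boxes $(n-j,j)$, $1\le j\le n-1$. $\mathbb{P}_{n,\alpha,\beta}(E_1,\dots,E_r)$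 denotes the probability of the intersection of the events. *)

theory Defs
  imports Complex_Main
begin

datatype sym = Emp | SA | SB

definition boxes :: "nat \<Rightarrow> (nat \<times> nat) set" where
  "boxes n = {(i, j). 1 \<le> i \<and> 1 \<le> j \<and> i + j \<le> n + 1}"

text \<open>A filling is a function on pairs (row, column); it is required to be Emp outside the staircase.\<close>
definition staircase_tableaux :: "nat \<Rightarrow> (nat \<Rightarrow> nat \<Rightarrow> sym) set" where
  "staircase_tableaux n = {S.
     (\<forall>i j. (i, j) \<notin> boxes n \<longrightarrow> S i j = Emp) \<and>
     (\<forall>i j i'. (i, j) \<in> boxes n \<and> S i j = SA \<and> 1 \<le> i' \<and> i' < i \<longrightarrow> S i' j = Emp) \<and>
     (\<forall>i j j'. (i, j) \<in> boxes n \<and> S i j = SB \<and> 1 \<le> j' \<and> j' < j \<longrightarrow> S i j' = Emp) \<and>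
     (\<forall>i j. (i, j) \<in> boxes n \<and> i + j = n + 1 \<longrightarrow> S i j \<noteq> Emp)}"

definition wt :: "nat \<Rightarrow> real \<Rightarrow> real \<Rightarrow> (nat \<Rightarrow> nat \<Rightarrow> sym) \<Rightarrow> real" where
  "wt n \<alpha> \<beta> S = \<alpha> ^ card {(i, j) \<in> boxes n. S i j = SA} * \<beta> ^ card {(i, j) \<in> boxes n. S i j = SB}"

definition Zn :: "nat \<Rightarrow> real \<Rightarrow> real \<Rightarrow> real" where
  "Zn n \<alpha> \<beta> = (\<Sum>T\<in>staircase_tableaux n. wt n \<alpha> \<beta> T)"

definition Pstair :: "nat \<Rightarrow> real \<Rightarrow> real \<Rightarrow> (nat \<Rightarrow> nat \<Rightarrow> sym) set \<Rightarrow> real" where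
  "Pstair n \<alpha> \<beta> E = (\<Sum>S\<in>staircase_tableaux n \<inter> E. wt n \<alpha> \<beta> S) / Zn n \<alpha> \<beta>"

definition alpha_event :: "nat \<Rightarrow> nat \<Rightarrow> (nat \<Rightarrow> nat \<Rightarrow> sym) set" where
  "alpha_event n j = {S. S (n - j) j = SA}"

end

theory Submission
  imports Defs
begin


definition cw :: "real \<Rightarrow> real \<Rightarrow> real \<Rightarrow> sym \<Rightarrow> real" where
  "cw \<alpha> \<beta> x s = (case s of Emp \<Rightarrow> x | SA \<Rightarrow> \<alpha> * x | SB \<Rightarrow> \<beta>)"

definition cols :: "nat set \<Rightarrow> (nat \<Rightarrow> sym) set" where
  "cols F = {c. (\<forall>i. i \<notin> F \<longrightarrow> c i = Emp) \<and> c (Max F) \<noteq> Emp \<and> (\<forall>i i'. c i = SA \<and> i' < i \<longrightarrow> c i' = Emp)}"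

definition noA :: "nat set \<Rightarrow> (nat \<Rightarrow> sym) set" where
  "noA F = {c. (\<forall>i. i \<notin> F \<longrightarrow> c i = Emp) \<and> c (Max F) = SB \<and> (\<forall>i. c i \<noteq> SA)}"

lemma sym_UNIV: "(UNIV :: sym set) = {Emp, SA, SB}"
  using sym.exhaust by auto

lemma finite_sym_UNIV: "finite (UNIV :: sym set)"
  by (simp add: sym_UNIV)

lemma finite_funs_emp: "finite A \<Longrightarrow> finite {c :: nat \<Rightarrow> sym. \<forall>i. i \<notin> A \<longrightarrow> c i = Emp}"
proof -
  assume A: "finite A"
  have "finite {f :: nat \<Rightarrow> sym. \<forall>x. (x \<in> A \<longrightarrow> f x \<in> UNIV) \<and> (x \<notin> A \<longrightarrow> f x = Emp)}"
    by (rule finite_set_of_finite_funs[OF A finite_sym_UNIV])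
  then show ?thesis by simp
qed

lemma finite_cols: "finite F \<Longrightarrow> finite (cols F)"
  by (rule finite_subset[OF _ finite_funs_emp[of F]]) (auto simp: cols_def)

lemma finite_noA: "finite F \<Longrightarrow> finite (noA F)"
  by (rule finite_subset[OF _ finite_funs_emp[of F]]) (auto simp: noA_def)

lemma noA_single: "noA {b} = {(\<lambda>i. if i = b then SB else Emp)}"
  by (auto simp: noA_def split: if_split_asm)

lemma noA_sum:
  assumes "finite A" "A \<noteq> {}"
  shows "(\<Sum>c\<in>noA A. \<Prod>i\<in>A. cw \<alpha> \<beta> x (c i)) = \<beta> * (x + \<beta>) ^ (card A - 1)"
  using assms
proof (induction A rule: finite_linorder_min_induct)
  case empty then show ?case by simp
next
  case (insert b A)
  show ?case
  proof (cases "A = {}")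
    case True
    then show ?thesis by (simp add: noA_single cw_def)
  next
    case False
    have bA: "b \<notin> A" using insert by auto
    have mx: "Max (insert b A) = Max A"
      using insert False by (metis Max_in Max_insert finite_insert less_imp_le max.absorb2 max.commute)
    have mA: "Max A \<noteq> b" using bA False Max_in insert by blast
    have split: "noA (insert b A) = noA A \<union> (\<lambda>c. c(b := SB)) ` noA A"
    proof
      show "noA (insert b A) \<subseteq> noA A \<union> (\<lambda>c. c(b := SB)) ` noA A"
      proof
        fix c assume c: "c \<in> noA (insert b A)"
        show "c \<in> noA A \<union> (\<lambda>c. c(b := SB)) ` noA A"
        proof (cases "c b = Emp")
          case True
          then have "c \<in> noA A" using c mx by (auto simp: noA_def)
          then show ?thesis by simp
        next
          case False
          then have cb: "c b = SB" using c by (auto simp: noA_def) (metis sym.exhaust)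
          have "c(b := Emp) \<in> noA A" using c mx mA by (auto simp: noA_def)
          moreover have "c = (c(b := Emp))(b := SB)" using cb by auto
          ultimately show ?thesis by blast
        qed
      qed
    next
      show "noA A \<union> (\<lambda>c. c(b := SB)) ` noA A \<subseteq> noA (insert b A)"
        using mx mA by (auto simp: noA_def split: if_split_asm)
    qed
    have disj: "noA A \<inter> (\<lambda>c. c(b := SB)) ` noA A = {}"
      using bA by (auto simp: noA_def)
    have inj: "inj_on (\<lambda>c. c(b := SB)) (noA A)"
      using bA unfolding inj_on_def noA_def by (auto simp: fun_eq_iff) (metis fun_upd_apply)
    have fin: "finite (noA A)" using insert finite_noA by auto
    let ?S = "\<Sum>c\<in>noA A. \<Prod>i\<in>A. cw \<alpha> \<beta> x (c i)"
    have e1: "(\<Sum>c\<in>noA A. \<Prod>i\<in>insert b A. cw \<alpha> \<beta> x (c i)) = x * ?S"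
      using bA insert(1) by (simp add: sum_distrib_left noA_def cw_def)
    have e2: "(\<Sum>c\<in>(\<lambda>c. c(b := SB)) ` noA A. \<Prod>i\<in>insert b A. cw \<alpha> \<beta> x (c i)) = \<beta> * ?S"
    proof -
      have "(\<Sum>c\<in>(\<lambda>c. c(b := SB)) ` noA A. \<Prod>i\<in>insert b A. cw \<alpha> \<beta> x (c i))
          = (\<Sum>c\<in>noA A. \<Prod>i\<in>insert b A. cw \<alpha> \<beta> x ((c(b := SB)) i))"
        by (rule sum.reindex[OF inj, unfolded comp_def])
      also have "\<dots> = (\<Sum>c\<in>noA A. \<beta> * (\<Prod>i\<in>A. cw \<alpha> \<beta> x (c i)))"
        using bA insert(1) by (intro sum.cong refl) (auto simp: cw_def intro!: prod.cong)
      finally show ?thesis by (simp add: sum_distrib_left)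
    qed
    have "(\<Sum>c\<in>noA (insert b A). \<Prod>i\<in>insert b A. cw \<alpha> \<beta> x (c i)) = x * ?S + \<beta> * ?S"
      unfolding split using e1 e2 disj fin by (subst sum.union_disjoint) auto
    also have "\<dots> = \<beta> * (x + \<beta>) ^ (card (insert b A) - 1)"
    proof -
      obtain k where k: "card A = Suc k" using insert(1) False by (metis card_0_eq not0_implies_Suc)
      show ?thesis using insert(1) insert(3) bA False by (simp add: k algebra_simps)
    qed
    finally show ?thesis .
  qed
qed

lemma cols_single: "cols {b} = {(\<lambda>i. if i = b then SA else Emp), (\<lambda>i. if i = b then SB else Emp)}"
proof
  show "cols {b} \<subseteq> {(\<lambda>i. if i = b then SA else Emp), (\<lambda>i. if i = b then SB else Emp)}"
  proof
    fix c assume c: "c \<in> cols {b}"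
    then have "c b = SA \<or> c b = SB" by (auto simp: cols_def) (metis sym.exhaust)
    moreover have "\<forall>i. i \<noteq> b \<longrightarrow> c i = Emp" using c by (auto simp: cols_def)
    ultimately show "c \<in> {(\<lambda>i. if i = b then SA else Emp), (\<lambda>i. if i = b then SB else Emp)}"
      by (auto simp: fun_eq_iff)
  qed
qed (auto simp: cols_def split: if_split_asm)

lemma cols_sum:
  assumes "finite A" "A \<noteq> {}"
  shows "(\<Sum>c\<in>cols A. \<Prod>i\<in>A. cw \<alpha> \<beta> x (c i)) = (\<alpha> * x + \<beta>) * (x + \<beta>) ^ (card A - 1)"
  using assms
proof (induction A rule: finite_linorder_min_induct)
  case empty then show ?case by simp
next
  case (insert b A)
  show ?case
  proof (cases "A = {}")
    case True
    have "(\<lambda>i::nat. if i = b then SA else Emp) \<noteq> (\<lambda>i. if i = b then SB else Emp)"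
      by (auto simp: fun_eq_iff)
    then show ?thesis using True by (simp add: cols_single cw_def)
  next
    case False
    have bA: "b \<notin> A" using insert by auto
    have mx: "Max (insert b A) = Max A"
      using insert False by (metis Max_in Max_insert less_imp_le max.absorb2)
    have mA: "Max A \<noteq> b" using bA False Max_in insert by blast
    let ?gA = "\<lambda>c. c(b := SA)" and ?gB = "\<lambda>c. c(b := SB)"
    have split: "cols (insert b A) = cols A \<union> (?gA ` noA A \<union> ?gB ` noA A)"
    proof
      show "cols (insert b A) \<subseteq> cols A \<union> (?gA ` noA A \<union> ?gB ` noA A)"
      proof
        fix c assume c: "c \<in> cols (insert b A)"
        have noSA: "c b \<noteq> Emp \<Longrightarrow> i \<noteq> b \<Longrightarrow> c i \<noteq> SA" for i
        proof
          assume "c b \<noteq> Emp" "i \<noteq> b" "c i = SA"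
          moreover have "i \<in> insert b A" using c \<open>c i = SA\<close> by (auto simp: cols_def)
          ultimately show False using c insert(2) \<open>c b \<noteq> Emp\<close> unfolding cols_def by (cases "i = b") auto
        qed
        show "c \<in> cols A \<union> (?gA ` noA A \<union> ?gB ` noA A)"
        proof (cases "c b")
          case Emp
          then have "c \<in> cols A" using c mx by (auto simp: cols_def)
          then show ?thesis by simp
        next
          case SA
          have m1: "c (Max A) \<noteq> Emp" using c mx by (auto simp: cols_def)
          have m2: "c (Max A) \<noteq> SA" using noSA[of "Max A"] mA SA by auto
          have "c(b := Emp) \<in> noA A" unfolding noA_def
          proof (intro CollectI conjI allI impI)
            show "(c(b := Emp)) (Max A) = SB" using m1 m2 mA by (cases "c (Max A)") auto
            show "(c(b := Emp)) i \<noteq> SA" for i using noSA[of i] SA by auto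
            show "(c(b := Emp)) i = Emp" if "i \<notin> A" for i using c that by (auto simp: cols_def)
          qed
          moreover have "c = ?gA (c(b := Emp))" using SA by auto
          ultimately show ?thesis by blast
        next
          case SB
          have m1: "c (Max A) \<noteq> Emp" using c mx by (auto simp: cols_def)
          have m2: "c (Max A) \<noteq> SA" using noSA[of "Max A"] mA SB by auto
          have "c(b := Emp) \<in> noA A" unfolding noA_def
          proof (intro CollectI conjI allI impI)
            show "(c(b := Emp)) (Max A) = SB" using m1 m2 mA by (cases "c (Max A)") auto
            show "(c(b := Emp)) i \<noteq> SA" for i using noSA[of i] SB by auto
            show "(c(b := Emp)) i = Emp" if "i \<notin> A" for i using c that by (auto simp: cols_def)
          qed
          moreover have "c = ?gB (c(b := Emp))" using SB by auto
          ultimately show ?thesis by blast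
        qed
      qed
    next
      show "cols A \<union> (?gA ` noA A \<union> ?gB ` noA A) \<subseteq> cols (insert b A)"
      proof
        fix c assume "c \<in> cols A \<union> (?gA ` noA A \<union> ?gB ` noA A)"
        then consider "c \<in> cols A" | d where "d \<in> noA A" "c = ?gA d" | d where "d \<in> noA A" "c = ?gB d"
          by blast
        then show "c \<in> cols (insert b A)"
        proof cases
          case 1 then show ?thesis using mx by (auto simp: cols_def)
        next
          case 2
          then show ?thesis using mx mA insert(2) unfolding cols_def noA_def
            by (auto split: if_split_asm) (metis less_asym insertE)
        next
          case 3
          then show ?thesis using mx mA insert(2) unfolding cols_def noA_def
            by (auto split: if_split_asm)
        qed
      qed
    qed
    have fin: "finite (noA A)" "finite (cols A)" using insert finite_noA finite_cols by auto
    have injA: "inj_on ?gA (noA A)"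
      using bA unfolding inj_on_def noA_def by (auto simp: fun_eq_iff) metis
    have injB: "inj_on ?gB (noA A)"
      using bA unfolding inj_on_def noA_def by (auto simp: fun_eq_iff) metis
    have d1: "cols A \<inter> (?gA ` noA A \<union> ?gB ` noA A) = {}"
      using bA by (auto simp: cols_def)
    have d2: "?gA ` noA A \<inter> ?gB ` noA A = {}"
      by (auto simp: fun_eq_iff) (metis fun_upd_same sym.distinct(6))
    let ?S = "\<Sum>c\<in>noA A. \<Prod>i\<in>A. cw \<alpha> \<beta> x (c i)"
    let ?C = "\<Sum>c\<in>cols A. \<Prod>i\<in>A. cw \<alpha> \<beta> x (c i)"
    have e1: "(\<Sum>c\<in>cols A. \<Prod>i\<in>insert b A. cw \<alpha> \<beta> x (c i)) = x * ?C"
      using bA insert(1) by (simp add: sum_distrib_left cols_def cw_def)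
    have eA: "(\<Sum>c\<in>?gA ` noA A. \<Prod>i\<in>insert b A. cw \<alpha> \<beta> x (c i)) = \<alpha> * x * ?S"
    proof -
      have "(\<Sum>c\<in>?gA ` noA A. \<Prod>i\<in>insert b A. cw \<alpha> \<beta> x (c i))
          = (\<Sum>c\<in>noA A. \<Prod>i\<in>insert b A. cw \<alpha> \<beta> x ((?gA c) i))"
        by (rule sum.reindex[OF injA, unfolded comp_def])
      also have "\<dots> = (\<Sum>c\<in>noA A. \<alpha> * x * (\<Prod>i\<in>A. cw \<alpha> \<beta> x (c i)))"
        using bA insert(1) by (intro sum.cong refl) (auto simp: cw_def intro!: prod.cong)
      finally show ?thesis by (simp add: sum_distrib_left)
    qed
    have eB: "(\<Sum>c\<in>?gB ` noA A. \<Prod>i\<in>insert b A. cw \<alpha> \<beta> x (c i)) = \<beta> * ?S"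
    proof -
      have "(\<Sum>c\<in>?gB ` noA A. \<Prod>i\<in>insert b A. cw \<alpha> \<beta> x (c i))
          = (\<Sum>c\<in>noA A. \<Prod>i\<in>insert b A. cw \<alpha> \<beta> x ((?gB c) i))"
        by (rule sum.reindex[OF injB, unfolded comp_def])
      also have "\<dots> = (\<Sum>c\<in>noA A. \<beta> * (\<Prod>i\<in>A. cw \<alpha> \<beta> x (c i)))"
        using bA insert(1) by (intro sum.cong refl) (auto simp: cw_def intro!: prod.cong)
      finally show ?thesis by (simp add: sum_distrib_left)
    qed
    have "(\<Sum>c\<in>cols (insert b A). \<Prod>i\<in>insert b A. cw \<alpha> \<beta> x (c i)) = x * ?C + (\<alpha> * x * ?S + \<beta> * ?S)"
      unfolding split using e1 eA eB d1 d2 fin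
      by (subst sum.union_disjoint, auto)+
    also have "\<dots> = (\<alpha> * x + \<beta>) * (x + \<beta>) ^ (card (insert b A) - 1)"
    proof -
      obtain k where k: "card A = Suc k" using insert(1) False by (metis card_0_eq not0_implies_Suc)
      show ?thesis using insert(1) insert(3) bA False noA_sum[OF insert(1) False, of \<alpha> \<beta> x]
        by (simp add: k algebra_simps)
    qed
    finally show ?thesis .
  qed
qed

lemma cols_top_set:
  assumes "finite A" "A \<noteq> {}"
  shows "cols A \<inter> {c. c (Max A) = SA} = {(\<lambda>i. if i = Max A then SA else Emp)}"
proof
  show "cols A \<inter> {c. c (Max A) = SA} \<subseteq> {(\<lambda>i. if i = Max A then SA else Emp)}"
  proof
    fix c assume c: "c \<in> cols A \<inter> {c. c (Max A) = SA}"
    have "c i = (if i = Max A then SA else Emp)" for i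
    proof (cases "i = Max A")
      case False
      then show ?thesis
      proof (cases "i \<in> A")
        case True
        then have "i < Max A" using False assms Max_ge le_neq_implies_less by blast
        then show ?thesis using c False by (auto simp: cols_def)
      qed (use c in \<open>auto simp: cols_def\<close>)
    qed (use c in auto)
    then show "c \<in> {(\<lambda>i. if i = Max A then SA else Emp)}" by auto
  qed
qed (use assms in \<open>auto simp: cols_def split: if_split_asm\<close>)

lemma cols_top_sum:
  assumes "finite A" "A \<noteq> {}"
  shows "(\<Sum>c\<in>cols A \<inter> {c. c (Max A) = SA}. \<Prod>i\<in>A. cw \<alpha> \<beta> x (c i)) = \<alpha> * x * x ^ (card A - 1)"
proof -
  have M: "Max A \<in> A" using assms by simp
  have "(\<Prod>i\<in>A. cw \<alpha> \<beta> x (if i = Max A then SA else Emp)) = cw \<alpha> \<beta> x (if Max A = Max A then SA else Emp) * (\<Prod>i\<in>A - {Max A}. cw \<alpha> \<beta> x (if i = Max A then SA else Emp))"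
    by (rule prod.remove[OF assms(1) M])
  also have "\<dots> = \<alpha> * x * x ^ (card A - 1)"
    using assms M by (simp add: cw_def prod_constant)
  finally show ?thesis using cols_top_set[OF assms] by simp
qed

lemma cols_notin: "m \<notin> A \<Longrightarrow> cols A \<inter> {c. c m = SA} = {}"
  by (auto simp: cols_def)

lemma cols_second_set:
  assumes "finite A" "m \<in> A" "m < Max A" "\<forall>i\<in>A. i \<le> m \<or> i = Max A"
  shows "cols A \<inter> {c. c m = SA} = {(\<lambda>i. if i = m then SA else if i = Max A then SB else Emp)}"
proof
  show "cols A \<inter> {c. c m = SA} \<subseteq> {(\<lambda>i. if i = m then SA else if i = Max A then SB else Emp)}"
  proof
    fix c assume c: "c \<in> cols A \<inter> {c. c m = SA}"
    have "c i = (if i = m then SA else if i = Max A then SB else Emp)" for i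
    proof (cases "i = m")
      case False
      show ?thesis
      proof (cases "i = Max A")
        case True
        have "c i \<noteq> Emp" using c True by (auto simp: cols_def)
        moreover have "c i \<noteq> SA" using c True assms(3) by (auto simp: cols_def)
        ultimately show ?thesis using True False by (cases "c i") auto
      next
        case F2: False
        show ?thesis
        proof (cases "i \<in> A")
          case True
          then have "i < m" using assms(4) False F2 by force
          then show ?thesis using c False F2 by (auto simp: cols_def)
        qed (use c False F2 in \<open>auto simp: cols_def\<close>)
      qed
    qed (use c in auto)
    then show "c \<in> {(\<lambda>i. if i = m then SA else if i = Max A then SB else Emp)}" by auto
  qed
next
  have M: "Max A \<in> A" using assms Max_in by blast
  show "{(\<lambda>i. if i = m then SA else if i = Max A then SB else Emp)} \<subseteq> cols A \<inter> {c. c m = SA}"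
    using assms M by (auto simp: cols_def split: if_split_asm)
qed

lemma cols_second_sum:
  assumes "finite A" "m \<in> A" "m < Max A" "\<forall>i\<in>A. i \<le> m \<or> i = Max A"
  shows "(\<Sum>c\<in>cols A \<inter> {c. c m = SA}. \<Prod>i\<in>A. cw \<alpha> \<beta> x (c i)) = \<alpha> * x * \<beta> * x ^ (card A - 2)"
proof -
  have M: "Max A \<in> A" using assms Max_in by blast
  let ?f = "\<lambda>i. if i = m then SA else if i = Max A then SB else Emp"
  have M2: "Max A \<in> A - {m}" using M assms(3) by auto
  have "(\<Prod>i\<in>A. cw \<alpha> \<beta> x (?f i)) = cw \<alpha> \<beta> x (?f m) * (\<Prod>i\<in>A - {m}. cw \<alpha> \<beta> x (?f i))"
    by (rule prod.remove[OF assms(1) assms(2)])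
  also have "(\<Prod>i\<in>A - {m}. cw \<alpha> \<beta> x (?f i)) = cw \<alpha> \<beta> x (?f (Max A)) * (\<Prod>i\<in>A - {m} - {Max A}. cw \<alpha> \<beta> x (?f i))"
    by (rule prod.remove[OF _ M2]) (use assms(1) in simp)
  also have "(\<Prod>i\<in>A - {m} - {Max A}. cw \<alpha> \<beta> x (?f i)) = x ^ (card A - 2)"
    using assms M M2 by (simp add: cw_def card_Diff_subset numeral_2_eq_2)
  finally show ?thesis using cols_second_set[OF assms] assms(3) by (simp add: cw_def)
qed



abbreviation "stair \<equiv> staircase_tableaux"

definition comb :: "(nat \<Rightarrow> sym) \<Rightarrow> (nat \<Rightarrow> nat \<Rightarrow> sym) \<Rightarrow> nat \<Rightarrow> nat \<Rightarrow> sym" where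
  "comb c T = (\<lambda>i j. if j = 0 then Emp else if j = 1 then c i else T i (j - 1))"

definition rest :: "(nat \<Rightarrow> nat \<Rightarrow> sym) \<Rightarrow> nat \<Rightarrow> nat \<Rightarrow> sym" where
  "rest T = (\<lambda>i j. if j = 0 then Emp else T i (Suc j))"

definition col :: "(nat \<Rightarrow> nat \<Rightarrow> sym) \<Rightarrow> nat \<Rightarrow> sym" where
  "col T = (\<lambda>i. T i 1)"

definition freeset :: "nat \<Rightarrow> (nat \<Rightarrow> nat \<Rightarrow> sym) \<Rightarrow> nat set" where
  "freeset n T = {i \<in> {1..n}. \<forall>j. T i j \<noteq> SB}"

definition Fof :: "nat \<Rightarrow> (nat \<Rightarrow> nat \<Rightarrow> sym) \<Rightarrow> nat set" where
  "Fof n T = insert (Suc n) (freeset n T)"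

lemma finite_freeset[simp]: "finite (freeset n T)"
  by (simp add: freeset_def)

lemma finite_Fof[simp]: "finite (Fof n T)"
  by (simp add: Fof_def)

lemma Fof_ne[simp]: "Fof n T \<noteq> {}"
  by (simp add: Fof_def)

lemma Max_Fof[simp]: "Max (Fof n T) = Suc n"
  unfolding Fof_def by (rule Max_eqI) (auto simp: freeset_def)

lemma card_Fof: "card (Fof n T) = Suc (card (freeset n T))"
  unfolding Fof_def by (subst card_insert_disjoint) (auto simp: freeset_def)

lemma boxes_iff: "(i, j) \<in> boxes n \<longleftrightarrow> 1 \<le> i \<and> 1 \<le> j \<and> i + j \<le> n + 1"
  by (simp add: boxes_def)

lemma stair_iff: "T \<in> stair n \<longleftrightarrow>
     (\<forall>i j. (i, j) \<notin> boxes n \<longrightarrow> T i j = Emp) \<and>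
     (\<forall>i j i'. (i, j) \<in> boxes n \<and> T i j = SA \<and> 1 \<le> i' \<and> i' < i \<longrightarrow> T i' j = Emp) \<and>
     (\<forall>i j j'. (i, j) \<in> boxes n \<and> T i j = SB \<and> 1 \<le> j' \<and> j' < j \<longrightarrow> T i j' = Emp) \<and>
     (\<forall>i j. (i, j) \<in> boxes n \<and> i + j = n + 1 \<longrightarrow> T i j \<noteq> Emp)"
  unfolding staircase_tableaux_def by (rule mem_Collect_eq)

lemma stairD:
  assumes "T \<in> stair n"
  shows "\<And>i j. (i, j) \<notin> boxes n \<Longrightarrow> T i j = Emp"
    and "\<And>i j i'. T i j = SA \<Longrightarrow> 1 \<le> i' \<Longrightarrow> i' < i \<Longrightarrow> T i' j = Emp"
    and "\<And>i j j'. T i j = SB \<Longrightarrow> 1 \<le> j' \<Longrightarrow> j' < j \<Longrightarrow> T i j' = Emp"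
    and "\<And>i j. 1 \<le> i \<Longrightarrow> 1 \<le> j \<Longrightarrow> i + j = n + 1 \<Longrightarrow> T i j \<noteq> Emp"
proof -
  note D = assms[unfolded stair_iff]
  have A: "\<And>i j. (i, j) \<notin> boxes n \<Longrightarrow> T i j = Emp" using D by blast
  show "\<And>i j. (i, j) \<notin> boxes n \<Longrightarrow> T i j = Emp" by (rule A)
  show "\<And>i j i'. T i j = SA \<Longrightarrow> 1 \<le> i' \<Longrightarrow> i' < i \<Longrightarrow> T i' j = Emp"
  proof -
    fix i j i' assume h: "T i j = SA" "1 \<le> i'" "i' < i"
    have "(i, j) \<in> boxes n" using A h(1) by force
    with h show "T i' j = Emp" using D by blast
  qed
  show "\<And>i j j'. T i j = SB \<Longrightarrow> 1 \<le> j' \<Longrightarrow> j' < j \<Longrightarrow> T i j' = Emp"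
  proof -
    fix i j j' assume h: "T i j = SB" "1 \<le> j'" "j' < j"
    have "(i, j) \<in> boxes n" using A h(1) by force
    with h show "T i j' = Emp" using D by blast
  qed
  show "\<And>i j. 1 \<le> i \<Longrightarrow> 1 \<le> j \<Longrightarrow> i + j = n + 1 \<Longrightarrow> T i j \<noteq> Emp"
  proof -
    fix i j assume h: "1 \<le> i" "1 \<le> j" "i + j = n + 1"
    then have "(i, j) \<in> boxes n" by (simp add: boxes_iff)
    with h show "T i j \<noteq> Emp" using D by blast
  qed
qed

lemma stairI:
  assumes "\<And>i j. (i, j) \<notin> boxes n \<Longrightarrow> T i j = Emp"
    and "\<And>i j i'. T i j = SA \<Longrightarrow> 1 \<le> i' \<Longrightarrow> i' < i \<Longrightarrow> T i' j = Emp"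
    and "\<And>i j j'. T i j = SB \<Longrightarrow> 1 \<le> j' \<Longrightarrow> j' < j \<Longrightarrow> T i j' = Emp"
    and "\<And>i j. 1 \<le> i \<Longrightarrow> 1 \<le> j \<Longrightarrow> i + j = n + 1 \<Longrightarrow> T i j \<noteq> Emp"
  shows "T \<in> stair n"
  unfolding stair_iff
proof (intro conjI allI impI)
  fix i j assume "(i, j) \<notin> boxes n" then show "T i j = Emp" by (rule assms(1))
next
  fix i j i' assume "(i, j) \<in> boxes n \<and> T i j = SA \<and> 1 \<le> i' \<and> i' < i"
  then show "T i' j = Emp" using assms(2) by blast
next
  fix i j j' assume "(i, j) \<in> boxes n \<and> T i j = SB \<and> 1 \<le> j' \<and> j' < j"
  then show "T i j' = Emp" using assms(3) by blast
next
  fix i j assume "(i, j) \<in> boxes n \<and> i + j = n + 1"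
  then show "T i j \<noteq> Emp" using assms(4) by (auto simp: boxes_iff)
qed


lemma comb_in:
  assumes T: "T \<in> stair n" and c: "c \<in> cols (Fof n T)"
  shows "comb c T \<in> stair (Suc n)"
proof -
  note TD = stairD[OF T]
  have C1: "\<And>i. i \<notin> Fof n T \<Longrightarrow> c i = Emp" and C2: "c (Suc n) \<noteq> Emp"
    and C3: "\<And>i i'. c i = SA \<Longrightarrow> i' < i \<Longrightarrow> c i' = Emp"
    using c by (auto simp: cols_def)
  show ?thesis
  proof (rule stairI)
    fix i j assume nb: "(i, j) \<notin> boxes (Suc n)"
    consider "j = 0" | "j = 1" | "j \<ge> 2" by linarith
    then show "comb c T i j = Emp"
    proof cases
      case 1 then show ?thesis by (simp add: comb_def)
    next
      case 2
      then have "i \<notin> Fof n T" using nb by (auto simp: boxes_iff Fof_def freeset_def)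
      then show ?thesis using 2 C1 by (simp add: comb_def)
    next
      case 3
      then have "(i, j - 1) \<notin> boxes n" using nb by (auto simp: boxes_iff)
      then show ?thesis using 3 TD(1) by (simp add: comb_def)
    qed
  next
    fix i j i' assume "comb c T i j = SA" "1 \<le> i'" "i' < i"
    then show "comb c T i' j = Emp"
      using TD(2)[of i "j - 1" i'] C3[of i i'] by (auto simp: comb_def split: if_split_asm)
  next
    fix i j j' assume h: "comb c T i j = SB" "1 \<le> j'" "j' < j"
    then have j2: "j \<ge> 2" and Tij: "T i (j - 1) = SB" by (auto simp: comb_def split: if_split_asm)
    have "(i, j - 1) \<in> boxes n" using TD(1)[of i "j - 1"] Tij by force
    then have "i \<notin> Fof n T" using Tij by (auto simp: Fof_def freeset_def boxes_iff)
    then have "c i = Emp" by (rule C1)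
    then show "comb c T i j' = Emp"
      using h j2 TD(3)[of i "j - 1" "j' - 1"] Tij by (auto simp: comb_def)
  next
    fix i j assume "1 \<le> i" "1 \<le> j" "i + j = Suc n + 1"
    then show "comb c T i j \<noteq> Emp"
      using C2 TD(4)[of i "j - 1"] by (auto simp: comb_def)
  qed
qed

lemma rest_in:
  assumes T: "T \<in> stair (Suc n)"
  shows "rest T \<in> stair n"
proof -
  note TD = stairD[OF T]
  show ?thesis
  proof (rule stairI)
    fix i j assume "(i, j) \<notin> boxes n"
    then show "rest T i j = Emp" using TD(1)[of i "Suc j"] by (auto simp: rest_def boxes_iff)
  next
    fix i j i' assume "rest T i j = SA" "1 \<le> i'" "i' < i"
    then show "rest T i' j = Emp" using TD(2)[of i "Suc j" i'] by (auto simp: rest_def split: if_split_asm)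
  next
    fix i j j' assume "rest T i j = SB" "1 \<le> j'" "j' < j"
    then show "rest T i j' = Emp" using TD(3)[of i "Suc j" "Suc j'"] by (auto simp: rest_def split: if_split_asm)
  next
    fix i j assume "1 \<le> i" "1 \<le> j" "i + j = n + 1"
    then show "rest T i j \<noteq> Emp" using TD(4)[of i "Suc j"] by (auto simp: rest_def)
  qed
qed

lemma col_in:
  assumes T: "T \<in> stair (Suc n)"
  shows "col T \<in> cols (Fof n (rest T))"
proof -
  note TD = stairD[OF T]
  have C1: "T i 1 = Emp" if "i \<notin> Fof n (rest T)" for i
  proof (cases "1 \<le> i \<and> i \<le> Suc n")
    case True
    then have "i \<le> n" using that by (auto simp: Fof_def)
    have "i \<notin> freeset n (rest T)" using that by (simp add: Fof_def)
    then have "\<not> (\<forall>j. rest T i j \<noteq> SB)" using True \<open>i \<le> n\<close> by (simp add: freeset_def)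
    then obtain j where "rest T i j = SB" by blast
    then have "j \<ge> 1" "T i (Suc j) = SB" by (auto simp: rest_def split: if_split_asm)
    then show ?thesis using TD(3)[of i "Suc j" 1] by auto
  next
    case False
    then show ?thesis using TD(1)[of i 1] by (auto simp: boxes_iff)
  qed
  have C3: "T i' 1 = Emp" if "T i 1 = SA" "i' < i" for i i'
  proof (cases "i' = 0")
    case True then show ?thesis using TD(1)[of 0 1] by (auto simp: boxes_iff)
  next
    case False then show ?thesis using TD(2)[of i 1 i'] that by auto
  qed
  show ?thesis unfolding cols_def col_def using C1 C3 TD(4)[of "Suc n" 1] by auto
qed

lemma comb_rest:
  assumes T: "T \<in> stair (Suc n)"
  shows "comb (col T) (rest T) = T"
proof -
  have "comb (col T) (rest T) i j = T i j" for i j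
  proof -
    consider "j = 0" | "j = 1" | "j \<ge> 2" by linarith
    then show ?thesis
    proof cases
      case 1 then show ?thesis using stairD(1)[OF T, of i j] by (simp add: comb_def boxes_iff)
    qed (auto simp: comb_def col_def rest_def)
  qed
  then show ?thesis by (simp add: fun_eq_iff)
qed

lemma comb_inj:
  assumes "T \<in> stair n" "T' \<in> stair n" "comb c T = comb c' T'"
  shows "c = c'" "T = T'"
proof -
  have "\<And>i. comb c T i 1 = comb c' T' i 1" using assms(3) by simp
  then show "c = c'" by (auto simp: comb_def fun_eq_iff)
  have "T i j = T' i j" for i j
  proof (cases "j = 0")
    case True then show ?thesis using stairD(1)[OF assms(1)] stairD(1)[OF assms(2)] by (auto simp: boxes_iff)
  next
    case False
    have "comb c T i (Suc j) = comb c' T' i (Suc j)" using assms(3) by simp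
    then show ?thesis using False by (simp add: comb_def)
  qed
  then show "T = T'" by (auto simp: fun_eq_iff)
qed

lemma bij_comb: "bij_betw (\<lambda>(T, c). comb c T) (SIGMA T:stair n. cols (Fof n T)) (stair (Suc n))"
proof (rule bij_betwI')
  fix x y assume "x \<in> (SIGMA T:stair n. cols (Fof n T))" "y \<in> (SIGMA T:stair n. cols (Fof n T))"
  then show "((case x of (T, c) \<Rightarrow> comb c T) = (case y of (T, c) \<Rightarrow> comb c T)) = (x = y)"
  proof -
    obtain T1 c1 T2 c2 where xy: "x = (T1, c1)" "y = (T2, c2)" by (cases x, cases y)
    have "T1 \<in> stair n" "T2 \<in> stair n" using \<open>x \<in> _\<close> \<open>y \<in> _\<close> xy by auto
    then show ?thesis using comb_inj[of T1 n T2 c1 c2] xy by auto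
  qed
next
  fix x assume "x \<in> (SIGMA T:stair n. cols (Fof n T))"
  then show "(case x of (T, c) \<Rightarrow> comb c T) \<in> stair (Suc n)" using comb_in by auto
next
  fix T assume "T \<in> stair (Suc n)"
  then show "\<exists>x\<in>(SIGMA T:stair n. cols (Fof n T)). T = (case x of (T, c) \<Rightarrow> comb c T)"
    using rest_in col_in comb_rest by (intro bexI[of _ "(rest T, col T)"]) auto
qed

lemma stair0: "stair 0 = {(\<lambda>i j. Emp)}"
proof -
  have "boxes 0 = {}" by (auto simp: boxes_def)
  then show ?thesis unfolding staircase_tableaux_def by (auto simp: fun_eq_iff)
qed

lemma finite_stair: "finite (stair n)"
proof (induction n)
  case 0 then show ?case by (simp add: stair0)
next
  case (Suc n)
  have "finite (SIGMA T:stair n. cols (Fof n T))" using Suc finite_cols by auto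
  then show ?case using bij_betw_finite[OF bij_comb] by blast
qed

lemma sum_stair_Suc:
  "(\<Sum>T\<in>stair (Suc n). g T) = (\<Sum>T\<in>stair n. \<Sum>c\<in>cols (Fof n T). g (comb c T))"
proof -
  have "(\<Sum>T\<in>stair (Suc n). g T) = (\<Sum>x\<in>(SIGMA T:stair n. cols (Fof n T)). g (case x of (T, c) \<Rightarrow> comb c T))"
    using sum.reindex_bij_betw[OF bij_comb, of g] by simp
  also have "\<dots> = (\<Sum>(T, c)\<in>(SIGMA T:stair n. cols (Fof n T)). g (comb c T))"
    by (intro sum.cong refl) auto
  also have "\<dots> = (\<Sum>T\<in>stair n. \<Sum>c\<in>cols (Fof n T). g (comb c T))"
    by (rule sum.Sigma[symmetric]) (use finite_stair finite_cols in auto)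
  finally show ?thesis .
qed



definition ww :: "real \<Rightarrow> real \<Rightarrow> sym \<Rightarrow> real" where
  "ww \<alpha> \<beta> s = (case s of Emp \<Rightarrow> 1 | SA \<Rightarrow> \<alpha> | SB \<Rightarrow> \<beta>)"

lemma finite_boxes[simp]: "finite (boxes n)"
  by (rule finite_subset[of _ "{0..n+1} \<times> {0..n+1}"]) (auto simp: boxes_def)

lemma prod_if_pow: "finite A \<Longrightarrow> (\<Prod>p\<in>A. if P p then (u::real) else 1) = u ^ card {p\<in>A. P p}"
  by (simp add: prod.inter_filter[symmetric])

lemma wt_prod: "wt n \<alpha> \<beta> T = (\<Prod>(i, j)\<in>boxes n. ww \<alpha> \<beta> (T i j))"
proof -
  have "(\<Prod>(i, j)\<in>boxes n. ww \<alpha> \<beta> (T i j)) =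
        (\<Prod>p\<in>boxes n. (if (case p of (i, j) \<Rightarrow> T i j = SA) then \<alpha> else 1) * (if (case p of (i, j) \<Rightarrow> T i j = SB) then \<beta> else 1))"
    by (intro prod.cong refl) (auto simp: ww_def split: sym.split)
  also have "\<dots> = \<alpha> ^ card {p\<in>boxes n. case p of (i, j) \<Rightarrow> T i j = SA} * \<beta> ^ card {p\<in>boxes n. case p of (i, j) \<Rightarrow> T i j = SB}"
    by (simp add: prod.distrib prod_if_pow)
  moreover have "{(i, j). (i, j) \<in> boxes n \<and> T i j = v} = {p\<in>boxes n. case p of (i, j) \<Rightarrow> T i j = v}" for v
    by auto
  ultimately show ?thesis by (simp add: wt_def)
qed

lemma boxes_Suc: "boxes (Suc n) = (\<lambda>i. (i, 1)) ` {1..Suc n} \<union> (\<lambda>(i, j). (i, Suc j)) ` boxes n"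
proof
  show "boxes (Suc n) \<subseteq> (\<lambda>i. (i, 1)) ` {1..Suc n} \<union> (\<lambda>(i, j). (i, Suc j)) ` boxes n"
  proof
    fix p assume "p \<in> boxes (Suc n)"
    then obtain i j where p: "p = (i, j)" "1 \<le> i" "1 \<le> j" "i + j \<le> Suc n + 1" by (auto simp: boxes_def)
    show "p \<in> (\<lambda>i. (i, 1)) ` {1..Suc n} \<union> (\<lambda>(i, j). (i, Suc j)) ` boxes n"
    proof (cases "j = 1")
      case True then show ?thesis using p by auto
    next
      case False
      then have "(i, j - 1) \<in> boxes n" "p = (\<lambda>(i, j). (i, Suc j)) (i, j - 1)" using p by (auto simp: boxes_def)
      then show ?thesis by blast
    qed
  qed
qed (auto simp: boxes_def)

lemma wt_comb:
  assumes "T \<in> stair n"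
  shows "wt (Suc n) \<alpha> \<beta> (comb c T) = (\<Prod>i\<in>{1..Suc n}. ww \<alpha> \<beta> (c i)) * wt n \<alpha> \<beta> T"
proof -
  have inj1: "inj_on (\<lambda>i::nat. (i, 1::nat)) {1..Suc n}" by (auto simp: inj_on_def)
  have inj2: "inj_on (\<lambda>(i, j). (i, Suc j)) (boxes n)" by (auto simp: inj_on_def)
  have disj: "(\<lambda>i. (i, 1)) ` {1..Suc n} \<inter> (\<lambda>(i, j). (i, Suc j)) ` boxes n = {}"
    by (auto simp: boxes_def)
  have "wt (Suc n) \<alpha> \<beta> (comb c T) = (\<Prod>(i, j)\<in>(\<lambda>i. (i, 1)) ` {1..Suc n}. ww \<alpha> \<beta> (comb c T i j)) *
        (\<Prod>(i, j)\<in>(\<lambda>(i, j). (i, Suc j)) ` boxes n. ww \<alpha> \<beta> (comb c T i j))"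
    unfolding wt_prod boxes_Suc by (rule prod.union_disjoint) (use disj in auto)
  also have "(\<Prod>(i, j)\<in>(\<lambda>i. (i, 1)) ` {1..Suc n}. ww \<alpha> \<beta> (comb c T i j)) = (\<Prod>i\<in>{1..Suc n}. ww \<alpha> \<beta> (c i))"
    by (subst prod.reindex[OF inj1]) (simp add: comb_def)
  also have "(\<Prod>(i, j)\<in>(\<lambda>(i, j). (i, Suc j)) ` boxes n. ww \<alpha> \<beta> (comb c T i j)) = wt n \<alpha> \<beta> T"
    unfolding wt_prod
    by (subst prod.reindex[OF inj2]) (auto simp: comb_def boxes_def intro!: prod.cong)
  finally show ?thesis .
qed

lemma freeset_comb:
  assumes "T \<in> stair n"
  shows "freeset (Suc n) (comb c T) = {i \<in> Fof n T. c i \<noteq> SB}"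
proof -
  note TD = stairD(1)[OF assms]
  have row: "(\<forall>j. comb c T i j \<noteq> SB) \<longleftrightarrow> c i \<noteq> SB \<and> (\<forall>j. T i j \<noteq> SB)" for i
  proof
    assume h: "\<forall>j. comb c T i j \<noteq> SB"
    have "T i j \<noteq> SB" for j
    proof (cases "j = 0")
      case True then show ?thesis using TD[of i 0] by (auto simp: boxes_def)
    next
      case False then show ?thesis using h[rule_format, of "Suc j"] by (simp add: comb_def)
    qed
    moreover have "c i \<noteq> SB" using h[rule_format, of 1] by (simp add: comb_def)
    ultimately show "c i \<noteq> SB \<and> (\<forall>j. T i j \<noteq> SB)" by blast
  qed (auto simp: comb_def)
  have lastrow: "T (Suc n) j \<noteq> SB" for j using TD[of "Suc n" j] by (auto simp: boxes_def)
  show ?thesis unfolding freeset_def Fof_def row using lastrow by auto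
qed

lemma wtx_comb:
  assumes T: "T \<in> stair n" and c: "c \<in> cols (Fof n T)"
  shows "wt (Suc n) \<alpha> \<beta> (comb c T) * x ^ card (freeset (Suc n) (comb c T)) =
         wt n \<alpha> \<beta> T * (\<Prod>i\<in>Fof n T. cw \<alpha> \<beta> x (c i))"
proof -
  have sub: "Fof n T \<subseteq> {1..Suc n}" by (auto simp: Fof_def freeset_def)
  have ce: "\<forall>i\<in>{1..Suc n} - Fof n T. ww \<alpha> \<beta> (c i) = 1" using c by (auto simp: cols_def ww_def)
  have p1: "(\<Prod>i\<in>{1..Suc n}. ww \<alpha> \<beta> (c i)) = (\<Prod>i\<in>Fof n T. ww \<alpha> \<beta> (c i))"
    by (rule prod.mono_neutral_right[OF _ sub ce]) simp
  have p2: "x ^ card (freeset (Suc n) (comb c T)) = (\<Prod>i\<in>Fof n T. if c i \<noteq> SB then x else 1)"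
    unfolding freeset_comb[OF T] by (simp add: prod_if_pow)
  have "(\<Prod>i\<in>Fof n T. ww \<alpha> \<beta> (c i)) * (\<Prod>i\<in>Fof n T. if c i \<noteq> SB then x else 1) = (\<Prod>i\<in>Fof n T. cw \<alpha> \<beta> x (c i))"
    by (subst prod.distrib[symmetric]) (auto simp: ww_def cw_def split: sym.split intro!: prod.cong)
  then show ?thesis using wt_comb[OF T] p1 p2 by (simp add: algebra_simps)
qed

definition S :: "real \<Rightarrow> real \<Rightarrow> nat \<Rightarrow> ((nat \<Rightarrow> nat \<Rightarrow> sym) \<Rightarrow> bool) \<Rightarrow> real \<Rightarrow> real" where
  "S \<alpha> \<beta> n P x = (\<Sum>T\<in>{T\<in>stair n. P T}. wt n \<alpha> \<beta> T * x ^ card (freeset n T))"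

lemma S_Suc:
  "S \<alpha> \<beta> (Suc n) P x = (\<Sum>T\<in>stair n. wt n \<alpha> \<beta> T * (\<Sum>c\<in>{c\<in>cols (Fof n T). P (comb c T)}. \<Prod>i\<in>Fof n T. cw \<alpha> \<beta> x (c i)))"
proof -
  have "S \<alpha> \<beta> (Suc n) P x = (\<Sum>T\<in>stair (Suc n). if P T then wt (Suc n) \<alpha> \<beta> T * x ^ card (freeset (Suc n) T) else 0)"
    unfolding S_def by (rule sum.inter_filter[OF finite_stair])
  also have "\<dots> = (\<Sum>T\<in>stair n. \<Sum>c\<in>cols (Fof n T). if P (comb c T) then wt (Suc n) \<alpha> \<beta> (comb c T) * x ^ card (freeset (Suc n) (comb c T)) else 0)"
    by (rule sum_stair_Suc)
  also have "\<dots> = (\<Sum>T\<in>stair n. \<Sum>c\<in>cols (Fof n T). if P (comb c T) then wt n \<alpha> \<beta> T * (\<Prod>i\<in>Fof n T. cw \<alpha> \<beta> x (c i)) else 0)"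
    by (intro sum.cong refl) (simp add: wtx_comb)
  also have "\<dots> = (\<Sum>T\<in>stair n. wt n \<alpha> \<beta> T * (\<Sum>c\<in>{c\<in>cols (Fof n T). P (comb c T)}. \<Prod>i\<in>Fof n T. cw \<alpha> \<beta> x (c i)))"
    by (intro sum.cong refl) (simp add: sum.inter_filter[OF finite_cols, symmetric] sum_distrib_left)
  finally show ?thesis .
qed



definition Ev :: "nat \<Rightarrow> nat \<Rightarrow> (nat \<Rightarrow> nat) \<Rightarrow> (nat \<Rightarrow> nat \<Rightarrow> sym) \<Rightarrow> bool" where
  "Ev n r js T = (\<forall>k\<in>{1..r}. T (n - js k) (js k) = SA)"

lemma S_Suc_gen:
  assumes "\<And>T. T \<in> stair n \<Longrightarrow> (\<Sum>c\<in>{c\<in>cols (Fof n T). P (comb c T)}. \<Prod>i\<in>Fof n T. cw \<alpha> \<beta> x (c i))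
             = (if Q T then K * y ^ card (freeset n T) else 0)"
  shows "S \<alpha> \<beta> (Suc n) P x = K * S \<alpha> \<beta> n Q y"
proof -
  have "S \<alpha> \<beta> (Suc n) P x = (\<Sum>T\<in>stair n. wt n \<alpha> \<beta> T * (if Q T then K * y ^ card (freeset n T) else 0))"
    unfolding S_Suc by (intro sum.cong refl) (simp add: assms)
  also have "\<dots> = (\<Sum>T\<in>stair n. if Q T then K * (wt n \<alpha> \<beta> T * y ^ card (freeset n T)) else 0)"
    by (intro sum.cong refl) auto
  also have "\<dots> = K * S \<alpha> \<beta> n Q y"
    unfolding S_def by (simp add: sum.inter_filter[OF finite_stair, symmetric] sum_distrib_left)
  finally show ?thesis .
qed

lemma comb_shift: "2 \<le> j \<Longrightarrow> j \<le> n \<Longrightarrow> comb c T (Suc n - j) j = T (n - (j - 1)) (j - 1)"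
  by (simp add: comb_def)

lemma Ev_comb:
  assumes "\<forall>k\<in>{1..r}. 2 \<le> js k \<and> js k \<le> n"
  shows "Ev (Suc n) r js (comb c T) \<longleftrightarrow> Ev n r (\<lambda>k. js k - 1) T"
proof -
  have "comb c T (Suc n - js k) (js k) = T (n - (js k - 1)) (js k - 1)" if "k \<in> {1..r}" for k
  proof -
    have "2 \<le> js k" "js k \<le> n" using assms that by auto
    moreover have "Suc n - js k = n - (js k - 1)" using \<open>2 \<le> js k\<close> by arith
    ultimately show ?thesis by (simp add: comb_def)
  qed
  then show ?thesis unfolding Ev_def by auto
qed

lemma card_Fof1: "card (Fof n T) - 1 = card (freeset n T)"
  by (simp add: card_Fof)

lemma S_plain:
  assumes "\<forall>k\<in>{1..r}. 2 \<le> js k \<and> js k \<le> n"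
  shows "S \<alpha> \<beta> (Suc n) (Ev (Suc n) r js) x = (\<alpha> * x + \<beta>) * S \<alpha> \<beta> n (Ev n r (\<lambda>k. js k - 1)) (x + \<beta>)"
proof (rule S_Suc_gen)
  fix T assume T: "T \<in> stair n"
  have "{c\<in>cols (Fof n T). Ev (Suc n) r js (comb c T)} = (if Ev n r (\<lambda>k. js k - 1) T then cols (Fof n T) else {})"
    using Ev_comb[OF assms] by auto
  then show "(\<Sum>c\<in>{c\<in>cols (Fof n T). Ev (Suc n) r js (comb c T)}. \<Prod>i\<in>Fof n T. cw \<alpha> \<beta> x (c i)) =
    (if Ev n r (\<lambda>k. js k - 1) T then (\<alpha> * x + \<beta>) * (x + \<beta>) ^ card (freeset n T) else 0)"
    using cols_sum[of "Fof n T" \<alpha> \<beta> x] by (simp add: card_Fof)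
qed

lemma S_top:
  assumes "\<forall>k\<in>{1..r}. 2 \<le> js k \<and> js k \<le> n"
  shows "S \<alpha> \<beta> (Suc n) (\<lambda>T. T (Suc n) 1 = SA \<and> Ev (Suc n) r js T) x = (\<alpha> * x) * S \<alpha> \<beta> n (Ev n r (\<lambda>k. js k - 1)) x"
proof (rule S_Suc_gen)
  fix T assume T: "T \<in> stair n"
  have "{c\<in>cols (Fof n T). comb c T (Suc n) 1 = SA \<and> Ev (Suc n) r js (comb c T)} =
     (if Ev n r (\<lambda>k. js k - 1) T then cols (Fof n T) \<inter> {c. c (Max (Fof n T)) = SA} else {})"
    using Ev_comb[OF assms] by (auto simp: comb_def)
  then show "(\<Sum>c\<in>{c\<in>cols (Fof n T). comb c T (Suc n) 1 = SA \<and> Ev (Suc n) r js (comb c T)}. \<Prod>i\<in>Fof n T. cw \<alpha> \<beta> x (c i)) =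
    (if Ev n r (\<lambda>k. js k - 1) T then (\<alpha> * x) * x ^ card (freeset n T) else 0)"
    using cols_top_sum[of "Fof n T" \<alpha> \<beta> x] by (simp add: card_Fof)
qed

lemma row_n_free:
  assumes T: "T \<in> stair n" and n: "1 \<le> n"
  shows "n \<in> freeset n T \<longleftrightarrow> T n 1 = SA"
proof -
  have o: "T n j = Emp" if "j \<noteq> 1" for j using stairD(1)[OF T, of n j] that by (auto simp: boxes_iff)
  have ne: "T n 1 \<noteq> Emp" using stairD(4)[OF T, of n 1] n by auto
  have "(\<forall>j. T n j \<noteq> SB) \<longleftrightarrow> T n 1 \<noteq> SB"
  proof
    assume h: "T n 1 \<noteq> SB"
    show "\<forall>j. T n j \<noteq> SB"
    proof
      fix j show "T n j \<noteq> SB" by (cases "j = 1") (use h o in auto)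
    qed
  qed blast
  also have "\<dots> \<longleftrightarrow> T n 1 = SA" using ne by (cases "T n 1") auto
  finally show ?thesis using n by (simp add: freeset_def)
qed

lemma S_second:
  assumes "\<forall>k\<in>{1..r}. 2 \<le> js k \<and> js k \<le> n" and n: "1 \<le> n"
  shows "S \<alpha> \<beta> (Suc n) (\<lambda>T. T n 1 = SA \<and> Ev (Suc n) r js T) x = (\<alpha> * \<beta>) * S \<alpha> \<beta> n (\<lambda>T. T n 1 = SA \<and> Ev n r (\<lambda>k. js k - 1) T) x"
proof (rule S_Suc_gen)
  fix T assume T: "T \<in> stair n"
  have set: "{c\<in>cols (Fof n T). comb c T n 1 = SA \<and> Ev (Suc n) r js (comb c T)} =
     (if Ev n r (\<lambda>k. js k - 1) T then cols (Fof n T) \<inter> {c. c n = SA} else {})"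
    using Ev_comb[OF assms(1)] n by (auto simp: comb_def)
  show "(\<Sum>c\<in>{c\<in>cols (Fof n T). comb c T n 1 = SA \<and> Ev (Suc n) r js (comb c T)}. \<Prod>i\<in>Fof n T. cw \<alpha> \<beta> x (c i)) =
    (if T n 1 = SA \<and> Ev n r (\<lambda>k. js k - 1) T then (\<alpha> * \<beta>) * x ^ card (freeset n T) else 0)"
  proof (cases "T n 1 = SA")
    case True
    then have nf: "n \<in> freeset n T" using row_n_free[OF T n] by simp
    have nF: "n \<in> Fof n T" using nf by (simp add: Fof_def)
    have all: "\<forall>i\<in>Fof n T. i \<le> n \<or> i = Max (Fof n T)" unfolding Max_Fof by (auto simp: Fof_def freeset_def)
    have cs: "(\<Sum>c\<in>cols (Fof n T) \<inter> {c. c n = SA}. \<Prod>i\<in>Fof n T. cw \<alpha> \<beta> x (c i)) = \<alpha> * x * \<beta> * x ^ (card (Fof n T) - 2)"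
      by (rule cols_second_sum) (use nF all in auto)
    have "card (freeset n T) \<ge> 1" using nf card_0_eq[of "freeset n T"] by fastforce
    then obtain k where k: "card (freeset n T) = Suc k" by (metis Suc_le_D One_nat_def)
    show ?thesis using True set cs by (simp add: card_Fof k)
  next
    case False
    then have "n \<notin> Fof n T" using row_n_free[OF T n] by (simp add: Fof_def)
    then show ?thesis using False set cols_notin[of n "Fof n T"] by simp
  qed
qed



lemma S0: "S \<alpha> \<beta> 0 P x = (if P (\<lambda>i j. Emp) then 1 else 0)"
proof -
  have "boxes 0 = {}" by (auto simp: boxes_def)
  moreover have "freeset 0 T = {}" for T by (auto simp: freeset_def)
  moreover have "{T \<in> stair 0. P T} = (if P (\<lambda>i j. Emp) then {(\<lambda>i j. Emp)} else {})"
    by (auto simp: stair0)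
  ultimately show ?thesis by (simp add: S_def wt_prod)
qed

lemma js_lower:
  assumes "\<forall>k. 1 \<le> k \<and> k < r \<longrightarrow> js k + 2 \<le> js (Suc k)"
  shows "1 \<le> k \<Longrightarrow> k \<le> r \<Longrightarrow> js 1 + 2 * (k - 1) \<le> js k"
proof (induction k)
  case 0 then show ?case by simp
next
  case (Suc k)
  show ?case
  proof (cases "k = 0")
    case False
    then have "js 1 + 2 * (k - 1) \<le> js k" using Suc by auto
    moreover have "js k + 2 \<le> js (Suc k)" using assms Suc False by auto
    ultimately show ?thesis using False by (cases k) auto
  qed simp
qed

lemma ball_split: "(\<forall>k\<in>{1..Suc r}. P k) \<longleftrightarrow> P 1 \<and> (\<forall>k\<in>{1..r}. P (Suc k))"
proof
  assume h: "P 1 \<and> (\<forall>k\<in>{1..r}. P (Suc k))"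
  show "\<forall>k\<in>{1..Suc r}. P k"
  proof
    fix k assume k: "k \<in> {1..Suc r}"
    show "P k"
    proof (cases "k = 1")
      case False
      then have "k - 1 \<in> {1..r}" "Suc (k - 1) = k" using k by auto
      then show ?thesis using h by metis
    qed (use h in simp)
  qed
qed auto

lemma closed:
  fixes \<alpha> \<beta> y :: real
  assumes a0: "\<alpha> \<noteq> 0"
  shows "(\<forall>k\<in>{1..r}. 1 \<le> js k \<and> js k < n) \<Longrightarrow> (\<forall>k. 1 \<le> k \<and> k < r \<longrightarrow> js k + 2 \<le> js (Suc k)) \<Longrightarrow>
    S \<alpha> \<beta> n (Ev n r js) (\<beta> * y) =
      (\<alpha> * \<beta>) ^ n * (\<Prod>k=1..r. y + real (js k) - 2 * real k + 1) * (\<Prod>i<n - 2 * r. y + 1 / \<alpha> + real i)"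
proof (induction n arbitrary: r js y rule: less_induct)
  case (less n)
  note rng = less.prems(1) and gap = less.prems(2)
  show ?case
  proof (cases n)
    case 0
    then have "r = 0" using rng by (cases r) auto
    then show ?thesis using 0 by (simp add: S0 Ev_def)
  next
    case (Suc m)
    show ?thesis
    proof (cases "r = 0 \<or> 2 \<le> js 1")
      case True
      have low: "2 * k \<le> js k" if "k \<in> {1..r}" for k
        using js_lower[OF gap, of k] that True by auto
      have all2: "\<forall>k\<in>{1..r}. 2 \<le> js k \<and> js k \<le> m"
        using rng low Suc by fastforce
      have r2: "2 * r \<le> m"
      proof (cases "r = 0")
        case False
        then have "r \<in> {1..r}" by auto
        then show ?thesis using low all2 by fastforce
      qed simp
      let ?js = "\<lambda>k. js k - 1"
      have rng': "\<forall>k\<in>{1..r}. 1 \<le> ?js k \<and> ?js k < m" using all2 rng Suc by fastforce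
      have gap': "\<forall>k. 1 \<le> k \<and> k < r \<longrightarrow> ?js k + 2 \<le> ?js (Suc k)"
      proof (intro allI impI)
        fix k assume k: "1 \<le> k \<and> k < r"
        then have "js k + 2 \<le> js (Suc k)" "2 \<le> js k" using gap all2 by auto
        then show "?js k + 2 \<le> ?js (Suc k)" by linarith
      qed
      have IH: "S \<alpha> \<beta> m (Ev m r ?js) (\<beta> * (y + 1)) =
          (\<alpha> * \<beta>) ^ m * (\<Prod>k=1..r. (y + 1) + real (?js k) - 2 * real k + 1) * (\<Prod>i<m - 2 * r. (y + 1) + 1 / \<alpha> + real i)"
        using less.IH[OF _ rng' gap'] Suc by simp
      have pe: "(\<Prod>k=1..r. (y + 1) + real (?js k) - 2 * real k + 1) = (\<Prod>k=1..r. y + real (js k) - 2 * real k + 1)"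
      proof (intro prod.cong refl)
        fix k assume "k \<in> {1..r}"
        then have "1 \<le> js k" using all2 by fastforce
        then show "(y + 1) + real (?js k) - 2 * real k + 1 = y + real (js k) - 2 * real k + 1"
          by (simp add: of_nat_diff)
      qed
      have qe: "(\<Prod>i<n - 2 * r. y + 1 / \<alpha> + real i) = (y + 1 / \<alpha>) * (\<Prod>i<m - 2 * r. (y + 1) + 1 / \<alpha> + real i)"
      proof -
        have "n - 2 * r = Suc (m - 2 * r)" using Suc r2 by simp
        then have "(\<Prod>i<n - 2 * r. y + 1 / \<alpha> + real i) = (\<Prod>i<Suc (m - 2 * r). y + 1 / \<alpha> + real i)" by simp
        also have "\<dots> = (y + 1 / \<alpha> + real 0) * (\<Prod>i<m - 2 * r. y + 1 / \<alpha> + real (Suc i))"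
          by (rule prod.lessThan_Suc_shift)
        also have "(\<Prod>i<m - 2 * r. y + 1 / \<alpha> + real (Suc i)) = (\<Prod>i<m - 2 * r. (y + 1) + 1 / \<alpha> + real i)"
          by (intro prod.cong refl) simp
        finally show ?thesis by simp
      qed
      have "S \<alpha> \<beta> n (Ev n r js) (\<beta> * y) = (\<alpha> * (\<beta> * y) + \<beta>) * S \<alpha> \<beta> m (Ev m r ?js) (\<beta> * y + \<beta>)"
        unfolding Suc by (rule S_plain[OF all2])
      also have "\<beta> * y + \<beta> = \<beta> * (y + 1)" by (simp add: algebra_simps)
      also have "\<alpha> * (\<beta> * y) + \<beta> = \<alpha> * \<beta> * (y + 1 / \<alpha>)" using a0 by (simp add: field_simps)
      finally have e: "S \<alpha> \<beta> n (Ev n r js) (\<beta> * y) = \<alpha> * \<beta> * (y + 1 / \<alpha>) * S \<alpha> \<beta> m (Ev m r ?js) (\<beta> * (y + 1))" .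
      show ?thesis unfolding e IH pe qe using Suc by (simp add: algebra_simps)
    next
      case False
      then have r1: "r \<ge> 1" by simp
      then have "1 \<le> js 1" using rng by auto
      then have j1: "js 1 = 1" using False by simp
      have "js 1 < n" using rng r1 by auto
      then have m1: "m \<ge> 1" using j1 Suc by simp
      then obtain p where p: "m = Suc p" by (cases m) auto
      obtain r' where r': "r = Suc r'" using r1 by (cases r) auto
      let ?jB = "\<lambda>k. js (Suc k)"
      have low: "3 \<le> ?jB k" if "k \<in> {1..r'}" for k
        using js_lower[OF gap, of "Suc k"] that r' j1 by auto
      have upB: "?jB k \<le> m" if "k \<in> {1..r'}" for k
      proof -
        have "Suc k \<in> {1..r}" using that r' by auto
        then show ?thesis using rng Suc by fastforce
      qed
      have allB: "\<forall>k\<in>{1..r'}. 2 \<le> ?jB k \<and> ?jB k \<le> m" using low upB by fastforce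
      have allC: "\<forall>k\<in>{1..r'}. 2 \<le> ?jB k - 1 \<and> ?jB k - 1 \<le> p" using low upB p by fastforce
      have evsplit: "Ev n r js T \<longleftrightarrow> T m 1 = SA \<and> Ev (Suc m) r' ?jB T" for T
      proof -
        show ?thesis unfolding Ev_def r' ball_split using Suc j1 by simp
      qed
      let ?jD = "\<lambda>k. js (Suc k) - 2"
      have rngD: "\<forall>k\<in>{1..r'}. 1 \<le> ?jD k \<and> ?jD k < p" using low upB p by fastforce
      have gapD: "\<forall>k. 1 \<le> k \<and> k < r' \<longrightarrow> ?jD k + 2 \<le> ?jD (Suc k)"
      proof (intro allI impI)
        fix k assume k: "1 \<le> k \<and> k < r'"
        then have "js (Suc k) + 2 \<le> js (Suc (Suc k))" using gap r' by auto
        moreover have "3 \<le> js (Suc k)" using low[of k] k by auto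
        ultimately show "?jD k + 2 \<le> ?jD (Suc k)" by linarith
      qed
      have IH: "S \<alpha> \<beta> p (Ev p r' ?jD) (\<beta> * y) =
          (\<alpha> * \<beta>) ^ p * (\<Prod>k=1..r'. y + real (?jD k) - 2 * real k + 1) * (\<Prod>i<p - 2 * r'. y + 1 / \<alpha> + real i)"
        using less.IH[OF _ rngD gapD] Suc p by simp
      have "S \<alpha> \<beta> n (Ev n r js) (\<beta> * y) = S \<alpha> \<beta> (Suc m) (\<lambda>T. T m 1 = SA \<and> Ev (Suc m) r' ?jB T) (\<beta> * y)"
        using evsplit Suc by (simp add: S_def)
      also have "\<dots> = (\<alpha> * \<beta>) * S \<alpha> \<beta> m (\<lambda>T. T m 1 = SA \<and> Ev m r' (\<lambda>k. ?jB k - 1) T) (\<beta> * y)"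
        by (rule S_second[OF allB m1])
      also have "S \<alpha> \<beta> m (\<lambda>T. T m 1 = SA \<and> Ev m r' (\<lambda>k. ?jB k - 1) T) (\<beta> * y) = (\<alpha> * (\<beta> * y)) * S \<alpha> \<beta> p (Ev p r' (\<lambda>k. ?jB k - 1 - 1)) (\<beta> * y)"
        unfolding p by (rule S_top[OF allC[unfolded p]])
      also have "(\<lambda>k. ?jB k - 1 - 1) = ?jD" by (simp add: fun_eq_iff numeral_2_eq_2)
      finally have eq: "S \<alpha> \<beta> n (Ev n r js) (\<beta> * y) = \<alpha> * \<beta> * (\<alpha> * (\<beta> * y) * S \<alpha> \<beta> p (Ev p r' ?jD) (\<beta> * y))" .
      have pe: "(\<Prod>k=1..r. y + real (js k) - 2 * real k + 1) = y * (\<Prod>k=1..r'. y + real (?jD k) - 2 * real k + 1)"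
      proof -
        have "(\<Prod>k=1..r. y + real (js k) - 2 * real k + 1) = (y + real (js 1) - 2 * real (1::nat) + 1) * (\<Prod>k=Suc 1..Suc r'. y + real (js k) - 2 * real k + 1)"
          unfolding r' by (rule prod.atLeast_Suc_atMost) simp
        also have "(\<Prod>k=Suc 1..Suc r'. y + real (js k) - 2 * real k + 1) = (\<Prod>k=1..r'. y + real (js (Suc k)) - 2 * real (Suc k) + 1)"
          by (rule prod.shift_bounds_cl_Suc_ivl)
        also have "\<dots> = (\<Prod>k=1..r'. y + real (?jD k) - 2 * real k + 1)"
        proof (intro prod.cong refl)
          fix k assume "k \<in> {1..r'}"
          then have "3 \<le> js (Suc k)" using low by blast
          then have "real (?jD k) = real (js (Suc k)) - 2" by (simp add: of_nat_diff)
          then show "y + real (js (Suc k)) - 2 * real (Suc k) + 1 = y + real (?jD k) - 2 * real k + 1" by simp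
        qed
        finally show ?thesis using j1 by simp
      qed
      have ne: "n - 2 * r = p - 2 * r'" using Suc p r' by simp
      show ?thesis unfolding eq IH pe ne using Suc p by (simp add: algebra_simps)
    qed
  qed
qed



lemma js_mono:
  fixes i j :: nat and js :: "nat \<Rightarrow> nat"
  assumes "\<forall>k. 1 \<le> k \<and> k < r \<longrightarrow> js k < js (k + 1)"
  shows "1 \<le> i \<Longrightarrow> i \<le> j \<Longrightarrow> j \<le> r \<Longrightarrow> js i \<le> js j"
proof (induction j)
  case 0 then show ?case by simp
next
  case (Suc j)
  show ?case
  proof (cases "i = Suc j")
    case False
    then have "js i \<le> js j" "1 \<le> j" using Suc by auto
    moreover have "js j < js (Suc j)" using assms Suc \<open>1 \<le> j\<close> by auto
    ultimately show ?thesis by linarith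
  qed simp
qed

lemma prod_pairs: "(\<Prod>k=1..r. ((c::real) + 2 * real k - 1) * (c + 2 * real k - 2)) = (\<Prod>i<2 * r. c + real i)"
proof (induction r)
  case 0 then show ?case by simp
next
  case (Suc r)
  have "(\<Prod>i<2 * Suc r. c + real i) = (\<Prod>i<2 * r. c + real i) * (c + real (2 * r)) * (c + real (Suc (2 * r)))"
    by (simp add: prod.lessThan_Suc)
  then show ?case using Suc by (simp add: algebra_simps)
qed

lemma prod_lessThan_add: "(\<Prod>i<p + q. (f::nat \<Rightarrow> real) i) = (\<Prod>i<p. f i) * (\<Prod>i<q. f (p + i))"
  by (induction q) (auto simp: algebra_simps)

theorem theorem3p3:
  fixes n r :: nat and \<alpha> \<beta> a b :: real and js :: "nat \<Rightarrow> nat"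
  assumes "n \<ge> 2" and "\<alpha> > 0" and "\<beta> > 0"
    and "a = 1 / \<alpha>" and "b = 1 / \<beta>"
    and "r \<ge> 1"
    and "1 \<le> js 1" and "js r \<le> n - 1"
    and "\<forall>k. 1 \<le> k \<and> k < r \<longrightarrow> js k < js (k + 1)"
  shows "((\<forall>k. 1 \<le> k \<and> k < r \<longrightarrow> js k + 2 \<le> js (k + 1)) \<longrightarrow>
           Pstair n \<alpha> \<beta> (\<Inter>k\<in>{1..r}. alpha_event n (js k)) =
           (\<Prod>k=1..r. (b + real (js (r - k + 1)) - 2 * real r + 2 * real k - 1) /
              ((real n + a + b - 2 * real r + 2 * real k - 1) * (real n + a + b - 2 * real r + 2 * real k - 2))))
       \<and> ((\<not> (\<forall>k. 1 \<le> k \<and> k < r \<longrightarrow> js k + 2 \<le> js (k + 1))) \<longrightarrow>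
           Pstair n \<alpha> \<beta> (\<Inter>k\<in>{1..r}. alpha_event n (js k)) = 0)"
proof -
  note mono = js_mono[OF assms(9)]
  have rng: "\<forall>k\<in>{1..r}. 1 \<le> js k \<and> js k < n"
  proof
    fix k assume k: "k \<in> {1..r}"
    have "js 1 \<le> js k" "js k \<le> js r" using mono k by auto
    then show "1 \<le> js k \<and> js k < n" using assms(1,7,8) by linarith
  qed
  have setE: "stair n \<inter> (\<Inter>k\<in>{1..r}. alpha_event n (js k)) = {T \<in> stair n. Ev n r js T}"
    by (auto simp: alpha_event_def Ev_def)
  have num: "(\<Sum>T\<in>stair n \<inter> (\<Inter>k\<in>{1..r}. alpha_event n (js k)). wt n \<alpha> \<beta> T) = S \<alpha> \<beta> n (Ev n r js) 1"
    unfolding setE S_def by simp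
  have den: "Zn n \<alpha> \<beta> = S \<alpha> \<beta> n (Ev n 0 js) 1"
    by (simp add: Zn_def S_def Ev_def)
  have P: "Pstair n \<alpha> \<beta> (\<Inter>k\<in>{1..r}. alpha_event n (js k)) = S \<alpha> \<beta> n (Ev n r js) 1 / S \<alpha> \<beta> n (Ev n 0 js) 1"
    unfolding Pstair_def num den ..
  have b1: "\<beta> * b = 1" using assms(3,5) by simp
  have a0: "\<alpha> \<noteq> 0" using assms(2) by simp
  show ?thesis
  proof (intro conjI impI)
    assume ng: "\<not> (\<forall>k. 1 \<le> k \<and> k < r \<longrightarrow> js k + 2 \<le> js (k + 1))"
    then obtain k where k: "1 \<le> k" "k < r" "js k + 2 > js (k + 1)" by auto
    then have adj: "js (k + 1) = js k + 1" using assms(9) by fastforce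
    have kk: "js (k + 1) < n" "1 \<le> js k" using rng k by auto
    let ?j = "js k"
    have empty: "{T \<in> stair n. Ev n r js T} = {}"
    proof (rule ccontr)
      assume "{T \<in> stair n. Ev n r js T} \<noteq> {}"
      then obtain T where T: "T \<in> stair n" "Ev n r js T" by auto
      have A1: "T (n - ?j) ?j = SA" using T(2) k by (auto simp: Ev_def)
      have "Suc k \<in> {1..r}" using k by auto
      then have "T (n - js (Suc k)) (js (Suc k)) = SA" using T(2) by (auto simp: Ev_def)
      then have A2: "T (n - ?j - 1) (?j + 1) = SA" using adj by simp
      have ne: "T (n - ?j) (?j + 1) \<noteq> Emp" using stairD(4)[OF T(1), of "n - ?j" "?j + 1"] kk adj by auto
      show False
      proof (cases "T (n - ?j) (?j + 1)")
        case SA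
        then have "T (n - ?j - 1) (?j + 1) = Emp" using stairD(2)[OF T(1), of "n - ?j" "?j + 1" "n - ?j - 1"] kk adj by auto
        then show False using A2 by simp
      next
        case SB
        then have "T (n - ?j) ?j = Emp" using stairD(3)[OF T(1), of "n - ?j" "?j + 1" ?j] kk by auto
        then show False using A1 by simp
      qed (use ne in simp)
    qed
    show "Pstair n \<alpha> \<beta> (\<Inter>k\<in>{1..r}. alpha_event n (js k)) = 0"
      unfolding P by (simp add: S_def empty)
  next
    assume gap0: "\<forall>k. 1 \<le> k \<and> k < r \<longrightarrow> js k + 2 \<le> js (k + 1)"
    then have gap: "\<forall>k. 1 \<le> k \<and> k < r \<longrightarrow> js k + 2 \<le> js (Suc k)" by simp
    have r2: "2 * r \<le> n"
      using js_lower[OF gap, of r] assms(6,7,8,1) by linarith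
    let ?Q = "\<lambda>m. \<Prod>i<m. b + a + real i"
    let ?Pj = "\<Prod>k=1..r. b + real (js k) - 2 * real k + 1"
    have numc: "S \<alpha> \<beta> n (Ev n r js) 1 = (\<alpha> * \<beta>) ^ n * ?Pj * ?Q (n - 2 * r)"
      using closed[OF a0 rng gap, of \<beta> b] b1 assms(4) by simp
    have denc: "S \<alpha> \<beta> n (Ev n 0 js) 1 = (\<alpha> * \<beta>) ^ n * ?Q n"
      using closed[OF a0, of 0 js n \<beta> b] b1 assms(4) by simp
    let ?c = "real n + a + b - 2 * real r"
    have Qsplit: "?Q n = ?Q (n - 2 * r) * (\<Prod>i<2 * r. ?c + real i)"
    proof -
      have "?Q n = ?Q ((n - 2 * r) + 2 * r)" using r2 by simp
      also have "\<dots> = ?Q (n - 2 * r) * (\<Prod>i<2 * r. b + a + real (n - 2 * r + i))"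
        by (rule prod_lessThan_add)
      also have "(\<Prod>i<2 * r. b + a + real (n - 2 * r + i)) = (\<Prod>i<2 * r. ?c + real i)"
        using r2 by (intro prod.cong refl) (simp add: of_nat_diff)
      finally show ?thesis .
    qed
    have numrev: "(\<Prod>k=1..r. b + real (js (r - k + 1)) - 2 * real r + 2 * real k - 1) = ?Pj"
    proof -
      have "(\<Prod>k=1..r. b + real (js (r - k + 1)) - 2 * real r + 2 * real k - 1)
          = (\<Prod>k=1..r. b + real (js (r - (r + 1 - k) + 1)) - 2 * real r + 2 * real (r + 1 - k) - 1)"
        by (rule prod.atLeastAtMost_rev)
      also have "\<dots> = ?Pj"
      proof (intro prod.cong refl)
        fix k assume "k \<in> {1..r}"
        then have "r - (r + 1 - k) + 1 = k" "real (r + 1 - k) = real r + 1 - real k" by (auto simp: of_nat_diff)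
        then show "b + real (js (r - (r + 1 - k) + 1)) - 2 * real r + 2 * real (r + 1 - k) - 1 = b + real (js k) - 2 * real k + 1"
          by simp
      qed
      finally show ?thesis .
    qed
    have Qpos: "?Q m > 0" for m
    proof (intro prod_pos ballI)
      fix i assume "i \<in> {..<m}"
      have "a > 0" "b > 0" using assms(2,3,4,5) by auto
      then show "b + a + real i > 0" by simp
    qed
    have dpos: "(\<alpha> * \<beta>) ^ n \<noteq> 0" using assms(2,3) by simp
    have "(\<Prod>k=1..r. (b + real (js (r - k + 1)) - 2 * real r + 2 * real k - 1) /
              ((real n + a + b - 2 * real r + 2 * real k - 1) * (real n + a + b - 2 * real r + 2 * real k - 2)))
        = ?Pj / (\<Prod>i<2 * r. ?c + real i)"
      unfolding prod_dividef numrev prod_pairs[of ?c r, symmetric] by (simp add: algebra_simps)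
    also have "\<dots> = ((\<alpha> * \<beta>) ^ n * ?Pj * ?Q (n - 2 * r)) / ((\<alpha> * \<beta>) ^ n * ?Q n)"
    proof -
      let ?D = "(\<alpha> * \<beta>) ^ n * ?Q (n - 2 * r)" and ?B = "\<Prod>i<2 * r. ?c + real i"
      have q: "?Q (n - 2 * r) \<noteq> 0" using Qpos[of "n - 2 * r"] by (metis less_irrefl)
      have Dne: "?D \<noteq> 0" using dpos q by (simp only: mult_eq_0_iff) blast
      have "((\<alpha> * \<beta>) ^ n * ?Pj * ?Q (n - 2 * r)) / ((\<alpha> * \<beta>) ^ n * (?Q (n - 2 * r) * ?B)) = (?D * ?Pj) / (?D * ?B)"
        by (simp add: ac_simps)
      also have "\<dots> = ?Pj / ?B" by (rule nonzero_mult_divide_mult_cancel_left[OF Dne])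
      finally show ?thesis unfolding Qsplit by simp
    qed
    finally show "Pstair n \<alpha> \<beta> (\<Inter>k\<in>{1..r}. alpha_event n (js k)) =
           (\<Prod>k=1..r. (b + real (js (r - k + 1)) - 2 * real r + 2 * real k - 1) /
              ((real n + a + b - 2 * real r + 2 * real k - 1) * (real n + a + b - 2 * real r + 2 * real k - 2)))"
      unfolding P numc denc by simp
  qed
qed

end
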